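(* Let $b\in\mathbb{R}$. If $b\ge\frac16$, then for all $x\in(0,1)$ \[ \frac{\pi}{2}\cdot\frac{(1-x)^{1/2}}{(1+x)^b}<\arccos x<2^{b+1/2}\cdot\frac{(1-x)^{1/2}}{(1+x)^b}. \tag{$*$} \] Moreover, the right-hand inequality in $( * )$ holds for all $x\in(0,1)$ if and only if $b\ge\frac16$. If $b\le\frac2\pi-\frac12$, then both inequalities in $( * )$ are reversed for all $x\in(0,1)$, i.e. $2^{b+1/2}\frac{(1-x)^{1/2}}{(1+x)^b}<\arccos x<\frac{\pi}{2}\frac{(1-x)^{1/2}}{(1+x)^b}$; and the reversed left-hand inequality $\arccos x<\frac{\pi}{2}\frac{(1-x)^{1/2}}{(1+x)^b}$ holds for all $x\in(0,1)$ if and only if $b\le\frac2\pi-\frac12$.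
   Context: $\arccos$ denotes the principal inverse cosine with values in $[0,\pi]$. *)

theory Defs
  imports Complex_Main
begin

end

theory Submission
  imports Defs "HOL-Analysis.Analysis" "HOL-Real_Asymp.Real_Asymp"
begin


lemma qA: assumes "0 < u" "u < pi/2" shows "sin u < u*(2+cos u)/3"
proof -
  define q where "q t = t/3 - sin t/(2+cos t)" for t :: real
  have cpos: "2 + cos t > 0" for t :: real using cos_ge_minus_one[of t] by linarith
  have "q 0 < q u"
  proof (rule DERIV_pos_imp_increasing_open[OF assms(1)])
    fix t :: real assume t: "0 < t" "t < u"
    have d: "(q has_real_derivative (1/3 - (cos t*(2+cos t) + sin t * sin t)/(2+cos t)^2)) (at t)"
      unfolding q_def [abs_def] using cpos[of t]
      by (auto intro!: derivative_eq_intros simp: power2_eq_square field_simps)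
    have "cos t < 1" using t assms cos_monotone_0_pi[of 0 t] by simp
    hence "0 < (cos t - 1)^2" by simp
    have "1/3 - (cos t*(2+cos t) + sin t * sin t)/(2+cos t)^2 = (cos t - 1)^2/(3*(2+cos t)^2)"
    proof -
      have e: "cos t*(2+cos t) + sin t * sin t = 2*cos t + 1"
        using sin_cos_squared_add3[of t] by (simp add: algebra_simps)
      have g: "1/3 - (2*c+1)/(2+c)^2 = (c-1)^2/(3*(2+c)^2)" if "2 + c > 0" for c :: real
        using that by (simp add: divide_simps) (simp add: power2_eq_square algebra_simps)
      show ?thesis unfolding e using g cpos[of t] by simp
    qed
    also have "\<dots> > 0" using \<open>0 < (cos t - 1)^2\<close> cpos[of t] by simp
    finally show "\<exists>y. (q has_real_derivative y) (at t) \<and> 0 < y" using d by blast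
  next
    show "continuous_on {0..u} q" unfolding q_def using cpos
      by (intro continuous_intros) (auto, metis cpos less_irrefl)
  qed
  thus ?thesis using cpos[of u] by (simp add: q_def field_simps)
qed




lemma u1test: assumes c1: "0 < c1" "c1 < (1::real)" shows "0 < arccos c1" "arccos c1 < pi/2" "cos (arccos c1) = c1"
proof -
  show "0 < arccos c1" using arccos_lt_bounded[of c1] c1 by simp
  have "arccos c1 < arccos 0" using c1 by (intro arccos_less_arccos) auto
  thus "arccos c1 < pi/2" by simp
  show "cos (arccos c1) = c1" using c1 by simp
qed
lemma keyN: fixes a c c1 :: real assumes "a < 4/3" "c1 = (a^2+2*a-4)/(2-a)^2"
  shows "2*c*(a+(2-a)*c) + 2*(2-a)*(1-c^2) - (a+(2-a)*c)^2 = (2-a)^2*(1-c)*(c - c1)"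
proof -
  have nz: "(2-a)^2 \<noteq> 0" using assms by simp
  have e: "(2-a)^2 * (c - c1) = (2-a)^2*c - (a^2+2*a-4)"
  proof -
    have e0: "(2-a)^2 * c1 = a^2+2*a-4" unfolding assms(2) using nz by simp
    show ?thesis by (simp add: right_diff_distrib e0)
  qed
  have "(2-a)^2*(1-c)*(c - c1) = (1-c)*((2-a)^2 * (c - c1))" by (simp add: algebra_simps)
  also have "\<dots> = (1-c)*((2-a)^2*c - (a^2+2*a-4))" by (simp only: e)
  also have "\<dots> = 2*c*(a+(2-a)*c) + 2*(2-a)*(1-c^2) - (a+(2-a)*c)^2"
    by (simp add: algebra_simps power2_eq_square)
  finally show ?thesis by simp
qed

lemma phideriv: fixes a t :: real assumes "a + (2-a)*cos t > 0"
  shows "((\<lambda>t. 2 * sin t / (a + (2-a)*cos t) - t) has_real_derivative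
     (2*cos t*(a + (2-a)*cos t) + 2 * sin t*((2-a) * sin t))/(a + (2-a)*cos t)^2 - 1) (at t)"
  using assms
  by (auto intro!: derivative_eq_intros simp: power2_eq_square)
lemma qB: assumes "0 < u" "u < pi/2" shows "u*(4/pi + (2-4/pi)*cos u) < 2 * sin u"
proof -
  define a where "a = 4/pi"
  have pb: "3 < pi" "pi < 3.15" using pi_approx pi_gt3 by auto
  have a1: "1 < a" "a < 4/3" using pb by (auto simp: a_def field_simps)
  have a2: "a^2 + 2*a - 4 > 0"
  proof -
    have "pi * pi < 3.15 * pi" using pb by (intro mult_strict_right_mono) auto
    hence "pi^2 - 2*pi - 4 < 0" using pb unfolding power2_eq_square by linarith
    hence "16 + 8*pi - 4*pi^2 > 0" by linarith
    hence "(16 + 8*pi - 4*pi^2)/pi^2 > 0" using pb by simp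
    moreover have "(16 + 8*pi - 4*pi^2)/pi^2 = a^2 + 2*a - 4" using pb
      by (simp add: a_def field_simps power2_eq_square)
    ultimately show ?thesis by simp
  qed
  define c1 where "c1 = (a^2+2*a-4)/(2-a)^2"
  have c1: "0 < c1" "c1 < 1"
  proof -
    have p: "(2-a)^2 > 0" using a1 by simp
    show "0 < c1" unfolding c1_def using p a2 by simp
    have "a^2+2*a-4 < (2-a)^2" using a1 by (simp add: power2_eq_square algebra_simps)
    thus "c1 < 1" unfolding c1_def using p by simp
  qed
  define u1 where "u1 = arccos c1"
  have u1: "0 < u1" "u1 < pi/2" "cos u1 = c1" using u1test[OF c1] unfolding u1_def by auto
  define D where "D t = a + (2-a)*cos t" for t
  have Dpos: "D t > 0" if "0 \<le> t" "t \<le> pi/2" for t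
  proof -
    have "(2-a)*cos t \<ge> 0" using a1 cos_ge_zero[of t] that by (intro mult_nonneg_nonneg) auto
    thus ?thesis using a1 unfolding D_def by linarith
  qed
  define \<phi> where "\<phi> t = 2 * sin t / D t - t" for t
  have deriv: "(\<phi> has_real_derivative ((2-a)^2*(1-cos t)*(cos t - c1))/(D t)^2) (at t)"
    if "0 \<le> t" "t \<le> pi/2" for t
  proof -
    have "(\<phi> has_real_derivative (2*cos t*D t + 2 * sin t*((2-a) * sin t))/(D t)^2 - 1) (at t)"
      unfolding \<phi>_def [abs_def] D_def [abs_def] using Dpos[OF that] unfolding D_def
      by (rule phideriv)
    moreover have "(2*cos t*D t + 2 * sin t*((2-a) * sin t))/(D t)^2 - 1
       = ((2-a)^2*(1-cos t)*(cos t - c1))/(D t)^2"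
    proof -
      have ss: "sin t * sin t = 1 - (cos t)^2" using sin_squared_eq[of t] by (simp add: power2_eq_square)
      have "2*cos t*D t + 2 * sin t*((2-a) * sin t) - (D t)^2
          = 2*cos t*(a+(2-a)*cos t) + 2*(2-a)*(1-(cos t)^2) - (a+(2-a)*cos t)^2"
      proof -
        have "2 * sin t*((2-a) * sin t) = 2*(2-a)*(sin t * sin t)" by (simp add: algebra_simps)
        hence e1: "2 * sin t*((2-a) * sin t) = 2*(2-a)*(1-(cos t)^2)" unfolding ss .
        show ?thesis unfolding e1 D_def ..
      qed
      also have "\<dots> = (2-a)^2*(1-cos t)*(cos t - c1)" using keyN[OF a1(2) c1_def] .
      finally have e: "2*cos t*D t + 2 * sin t*((2-a) * sin t) - (D t)^2 = (2-a)^2*(1-cos t)*(cos t - c1)" .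
      have nz: "(D t)^2 \<noteq> 0" using Dpos[OF that] by simp
      have "(2*cos t*D t + 2 * sin t*((2-a) * sin t))/(D t)^2 - 1
          = (2*cos t*D t + 2 * sin t*((2-a) * sin t) - (D t)^2)/(D t)^2"
        using nz by (simp add: diff_divide_distrib)
      thus ?thesis unfolding e .
    qed
    ultimately show ?thesis by simp
  qed
  have cont: "continuous_on {x..y} \<phi>" if "0 \<le> x" "y \<le> pi/2" for x y
  proof (rule DERIV_continuous_on[where D = "\<lambda>t. ((2-a)^2*(1-cos t)*(cos t - c1))/(D t)^2"])
    fix t assume "t \<in> {x..y}"
    hence t: "0 \<le> t" "t \<le> pi/2" using that by auto
    show "(\<phi> has_field_derivative ((2-a)^2*(1-cos t)*(cos t - c1))/(D t)^2) (at t within {x..y})"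
      using has_field_derivative_at_within[OF deriv[OF t]] .
  qed
  have "\<phi> u > 0"
  proof (cases "u \<le> u1")
    case True
    have "\<phi> 0 < \<phi> u"
    proof (rule DERIV_pos_imp_increasing_open[OF assms(1)])
      fix t assume t: "0 < t" "t < u"
      have "cos t > c1" using cos_monotone_0_pi[of t u1] t True u1 by simp
      moreover have "cos t < 1" using cos_monotone_0_pi[of 0 t] t assms by simp
      moreover have "(D t)^2 > 0" using Dpos[of t] t assms by simp
      moreover have "(2-a)^2 > 0" using a1 by simp
      ultimately have "((2-a)^2*(1-cos t)*(cos t - c1))/(D t)^2 > 0"
        by (intro divide_pos_pos mult_pos_pos) auto
      thus "\<exists>y. (\<phi> has_real_derivative y) (at t) \<and> 0 < y" using deriv[of t] t assms by auto
    qed (use cont assms in auto)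
    thus ?thesis by (simp add: \<phi>_def D_def)
  next
    case False
    have "\<phi> (pi/2) < \<phi> u"
    proof (rule DERIV_neg_imp_decreasing_open[OF assms(2)])
      fix t assume t: "u < t" "t < pi/2"
      have "cos t < c1" using cos_monotone_0_pi[of u1 t] t False u1 by simp
      moreover have "cos t < 1" using cos_monotone_0_pi[of 0 t] t assms by simp
      moreover have "(D t)^2 > 0" using Dpos[of t] t assms by simp
      moreover have "(2-a)^2 > 0" using a1 by simp
      ultimately have "(2-a)^2*(1-cos t)*(cos t - c1) < 0"
        by (intro mult_pos_neg mult_pos_pos) auto
      hence "((2-a)^2*(1-cos t)*(cos t - c1))/(D t)^2 < 0"
        using \<open>(D t)^2 > 0\<close> by (intro divide_neg_pos)
      thus "\<exists>y. (\<phi> has_real_derivative y) (at t) \<and> y < 0" using deriv[of t] t assms by auto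
    qed (use cont assms in auto)
    moreover have "\<phi> (pi/2) = 0" using pb by (simp add: \<phi>_def D_def a_def)
    ultimately show ?thesis by simp
  qed
  hence "u < 2 * sin u / D u" by (simp add: \<phi>_def)
  hence "u * D u < 2 * sin u" using Dpos[of u] assms by (simp add: field_simps)
  thus ?thesis by (simp add: D_def a_def)
qed

definition Gf :: "real \<Rightarrow> real \<Rightarrow> real" where
  "Gf b s = ln (sin s) - ln s - 2 * b * ln (cos s)"

lemma trans_lem:
  fixes b s :: real
  assumes s: "0 < s" "s < pi/4"
  defines "x \<equiv> cos (2 * s)"
  defines "Q \<equiv> (1 - x) powr (1/2) / (1 + x) powr b"
  shows "0 < x" "x < 1" "arccos x = 2 * s"
    "arccos x < 2 powr (b + 1/2) * Q \<longleftrightarrow> 0 < Gf b s"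
    "2 powr (b + 1/2) * Q < arccos x \<longleftrightarrow> Gf b s < 0"
    "pi / 2 * Q < arccos x \<longleftrightarrow> Gf b s < Gf b (pi/4)"
    "arccos x < pi / 2 * Q \<longleftrightarrow> Gf b (pi/4) < Gf b s"
proof -
  have sc: "0 < sin s" "0 < cos s" using s by (auto intro!: sin_gt_zero cos_gt_zero)
  show x0: "0 < x" unfolding x_def using s by (auto intro!: cos_gt_zero)
  have "cos (2 * s) < cos 0" using s by (intro cos_monotone_0_pi) auto
  thus x1: "x < 1" unfolding x_def by simp
  show ac: "arccos x = 2 * s" unfolding x_def using s by (intro arccos_cos) auto
  have e1: "1 - x = 2 * (sin s)^2" unfolding x_def by (simp add: cos_double_sin)
  have e2: "1 + x = 2 * (cos s)^2" unfolding x_def by (simp add: cos_double_cos)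
  have lnQ: "ln Q = ln 2 / 2 + ln (sin s) - b * ln 2 - 2 * b * ln (cos s)"
  proof -
    have "ln Q = (1/2) * ln (1 - x) - b * ln (1 + x)"
      unfolding Q_def using x0 x1 by (simp add: ln_div ln_powr)
    also have "\<dots> = ln 2 / 2 + ln (sin s) - b * ln 2 - 2 * b * ln (cos s)"
      unfolding e1 e2 using sc by (simp add: ln_mult ln_realpow algebra_simps)
    finally show ?thesis .
  qed
  have Qpos: "Q > 0" unfolding Q_def using x0 x1 by simp
  have lnA: "ln (arccos x) = ln 2 + ln s" unfolding ac using s by (simp add: ln_mult)
  have lnR: "ln (2 powr (b + 1/2) * Q) = (b + 1/2) * ln 2 + ln Q"
    using Qpos by (simp add: ln_mult ln_powr)
  have lnL: "ln (pi / 2 * Q) = ln pi - ln 2 + ln Q"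
    using Qpos by (simp add: ln_mult ln_div)
  have G4: "Gf b (pi/4) = b * ln 2 + 3/2 * ln 2 - ln pi"
  proof -
    have "ln (sqrt 2 / 2) = - ln 2 / 2"
      by (simp add: ln_div ln_sqrt)
    moreover have "ln (pi/4) = ln pi - 2 * ln 2"
      by (simp add: ln_div ln_realpow[of 2 2, simplified])
    ultimately show ?thesis by (simp add: Gf_def sin_45 cos_45 algebra_simps)
  qed
  have lnR': "ln (2 powr (b + 1/2) * Q) = ln 2 + ln (sin s) - 2 * b * ln (cos s)"
    using lnR lnQ by (simp add: algebra_simps)
  have lnL': "ln (pi / 2 * Q) = ln pi - ln 2 / 2 + ln (sin s) - b * ln 2 - 2 * b * ln (cos s)"
    using lnL lnQ by (simp add: algebra_simps)
  have A: "arccos x > 0" using ac s by simp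
  have R: "2 powr (b + 1/2) * Q > 0" using Qpos by simp
  have L: "pi / 2 * Q > 0" using Qpos by simp
  show "arccos x < 2 powr (b + 1/2) * Q \<longleftrightarrow> 0 < Gf b s"
    using ln_less_cancel_iff[OF A R] lnA lnR' unfolding Gf_def by linarith
  show "2 powr (b + 1/2) * Q < arccos x \<longleftrightarrow> Gf b s < 0"
    using ln_less_cancel_iff[OF R A] lnA lnR' unfolding Gf_def by linarith
  show "pi / 2 * Q < arccos x \<longleftrightarrow> Gf b s < Gf b (pi/4)"
    using ln_less_cancel_iff[OF L A] lnA lnL' G4 unfolding Gf_def by linarith
  show "arccos x < pi / 2 * Q \<longleftrightarrow> Gf b (pi/4) < Gf b s"
    using ln_less_cancel_iff[OF A L] lnA lnL' G4 unfolding Gf_def by linarith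
qed


definition Gd :: "real \<Rightarrow> real \<Rightarrow> real" where
  "Gd b s = cos s / sin s - 1 / s + 2 * b * (sin s / cos s)"

lemma G_deriv: "0 < s \<Longrightarrow> s < pi/2 \<Longrightarrow> (Gf b has_real_derivative Gd b s) (at s)"
  unfolding Gf_def [abs_def] Gd_def
  using sin_gt_zero[of s] cos_gt_zero[of s]
  by (auto intro!: derivative_eq_intros simp: field_simps)

lemma G_cont: assumes "0 < a" "c < pi/2" shows "continuous_on {a..c} (Gf b)"
proof (rule DERIV_continuous_on[where D = "\<lambda>s. Gd b s"])
  fix x assume "x \<in> {a..c}"
  hence "0 < x" "x < pi/2" using assms by auto
  thus "(Gf b has_field_derivative Gd b x) (at x within {a..c})"
    using has_field_derivative_at_within[OF G_deriv] by blast
qed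

lemma lim1: "((\<lambda>s::real. ln (sin s) - ln s) \<longlongrightarrow> 0) (at_right 0)"
  by real_asymp
lemma lim2: "((\<lambda>s::real. ln (cos s)) \<longlongrightarrow> 0) (at_right 0)"
  by real_asymp
lemma G_lim: "(Gf b \<longlongrightarrow> 0) (at_right 0)"
proof -
  have "((\<lambda>s::real. (ln (sin s) - ln s) - 2 * b * ln (cos s)) \<longlongrightarrow> 0 - 2 * b * 0) (at_right 0)"
    by (intro tendsto_intros lim1 lim2)
  thus ?thesis by (simp add: Gf_def [abs_def])
qed
lemma lim3: "((\<lambda>s::real. (cos s * s - sin s)/(s * s * sin s)) \<longlongrightarrow> (-1/3::real)) (at_right 0)"
  by real_asymp
lemma lim4: "((\<lambda>s::real. (sin s / cos s) / s) \<longlongrightarrow> 1) (at_right 0)"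
  by real_asymp

lemma Gd_shift: "Gd b s = Gd b' s + 2 * (b - b') * (sin s / cos s)"
  by (simp add: Gd_def algebra_simps)

lemma GdA: assumes "0 < s" "s < pi/4" shows "Gd (1/6) s > 0"
proof -
  have h: "sin (2 * s) < (2 * s) * (2 + cos (2 * s)) / 3" using assms by (intro qA) auto
  define S where "S = sin s"
  define C where "C = cos s"
  have S: "S > 0" "C > 0" using assms by (auto simp: S_def C_def intro!: sin_gt_zero cos_gt_zero)
  have one: "S^2 + C^2 = 1" by (simp add: S_def C_def)
  have h2: "3 * (S * C) < s * (3 * C^2 + S^2)"
  proof -
    define K where "K = 2 + C^2 - S^2"
    have e1: "sin (2 * s) = 2 * S * C" by (simp add: S_def C_def sin_double)
    have e2: "2 + cos (2 * s) = K" by (simp add: K_def S_def C_def cos_double)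
    have "2 * S * C < 2 * s * K / 3" using h unfolding e1 e2 .
    hence "3 * (S * C) < s * K" by linarith
    also have "K = 3 * C^2 + S^2" using one by (simp add: K_def)
    finally show ?thesis .
  qed
  have "Gd (1/6) s = (3 * s * C^2 - 3 * (S * C) + s * S^2) / (3 * s * S * C)"
    using S assms by (simp add: Gd_def S_def[symmetric] C_def[symmetric] field_simps power2_eq_square)
  also have "\<dots> > 0" using h2 S assms by (intro divide_pos_pos) (auto simp: algebra_simps)
  finally show ?thesis .
qed

lemma GdB: assumes "0 < s" "s < pi/4" shows "Gd (2 / pi - 1/2) s < 0"
proof -
  have h: "(2 * s) * (4/pi + (2-4/pi) * cos (2 * s)) < 2 * sin (2 * s)" using assms by (intro qB) auto
  define S where "S = sin s"
  define C where "C = cos s"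
  define a where "a = 4 / pi"
  have S: "S > 0" "C > 0" using assms by (auto simp: S_def C_def intro!: sin_gt_zero cos_gt_zero)
  have one: "S^2 + C^2 = 1" by (simp add: S_def C_def)
  have h2: "s * C^2 + (a - 1) * s * S^2 < S * C"
  proof -
    have "(2 * s) * (a + (2 - a) * (C^2 - S^2)) < 2 * (2 * S * C)"
      using h by (simp add: S_def C_def a_def sin_double cos_double)
    moreover have "a + (2 - a) * (C^2 - S^2) = a * (S^2 + C^2) + (2 - a) * (C^2 - S^2)"
      using one by simp
    moreover have "a * (S^2 + C^2) + (2 - a) * (C^2 - S^2) = 2 * C^2 + (2 * a - 2) * S^2"
      by (simp add: algebra_simps)
    ultimately have "(2 * s) * (2 * C^2 + (2 * a - 2) * S^2) < 2 * (2 * S * C)" by simp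
    thus ?thesis by (simp add: algebra_simps)
  qed
  have "Gd (2 / pi - 1/2) s = (s * C^2 - S * C + (a - 1) * s * S^2) / (s * S * C)"
    using S assms by (simp add: Gd_def S_def[symmetric] C_def[symmetric] a_def field_simps power2_eq_square)
  also have "\<dots> < 0" using h2 S assms by (intro divide_neg_pos) (auto simp: algebra_simps)
  finally show ?thesis .
qed

lemma G_inc: assumes "0 < t" "t < s" "s < pi/2" "\<And>y. t < y \<Longrightarrow> y < s \<Longrightarrow> Gd b y > 0"
  shows "Gf b t < Gf b s"
proof (rule DERIV_pos_imp_increasing_open[OF assms(2)])
  fix y assume "t < y" "y < s"
  thus "\<exists>z. (Gf b has_real_derivative z) (at y) \<and> 0 < z"
    using assms G_deriv[of y b] by auto
qed (use assms G_cont in auto)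

lemma G_dec: assumes "0 < t" "t < s" "s < pi/2" "\<And>y. t < y \<Longrightarrow> y < s \<Longrightarrow> Gd b y < 0"
  shows "Gf b s < Gf b t"
proof (rule DERIV_neg_imp_decreasing_open[OF assms(2)])
  fix y assume "t < y" "y < s"
  thus "\<exists>z. (Gf b has_real_derivative z) (at y) \<and> z < 0"
    using assms G_deriv[of y b] by auto
qed (use assms G_cont in auto)

lemma part1: assumes "b \<ge> 1/6" "0 < s" "s < pi/4"
  shows "0 < Gf b s" "Gf b s < Gf b (pi/4)"
proof -
  have pos: "Gd b y > 0" if "0 < y" "y < pi/4" for y
  proof -
    have "sin y / cos y \<ge> 0" using that by (auto intro!: divide_nonneg_pos sin_ge_zero cos_gt_zero)
    hence "2 * (b - 1/6) * (sin y / cos y) \<ge> 0" using assms by (intro mult_nonneg_nonneg) auto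
    thus ?thesis using Gd_shift[of b y "1/6"] GdA[OF that] by linarith
  qed
  show "Gf b s < Gf b (pi/4)" using assms pos by (intro G_inc) auto
  have "eventually (\<lambda>t. Gf b t \<le> Gf b (s/2)) (at_right 0)"
    unfolding eventually_at_right_field
    by (rule exI[of _ "s/2"]) (use assms pos in \<open>auto intro!: less_imp_le[OF G_inc]\<close>)
  hence "0 \<le> Gf b (s/2)" by (intro tendsto_upperbound[OF G_lim]) auto
  also have "Gf b (s/2) < Gf b s" using assms pos by (intro G_inc) auto
  finally show "0 < Gf b s" .
qed

lemma part3: assumes "b \<le> 2 / pi - 1/2" "0 < s" "s < pi/4"
  shows "Gf b s < 0" "Gf b (pi/4) < Gf b s"
proof -
  have neg: "Gd b y < 0" if "0 < y" "y < pi/4" for y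
  proof -
    have "sin y / cos y \<ge> 0" using that by (auto intro!: divide_nonneg_pos sin_ge_zero cos_gt_zero)
    moreover have "2 * (b - (2 / pi - 1/2)) \<le> 0" using assms by simp
    ultimately have "2 * (b - (2 / pi - 1/2)) * (sin y / cos y) \<le> 0"
      using mult_nonpos_nonneg by blast
    thus ?thesis using Gd_shift[of b y "2 / pi - 1/2"] GdB[OF that] by linarith
  qed
  show "Gf b (pi/4) < Gf b s" using assms neg by (intro G_dec) auto
  have "eventually (\<lambda>t. Gf b (s/2) \<le> Gf b t) (at_right 0)"
    unfolding eventually_at_right_field
    by (rule exI[of _ "s/2"]) (use assms neg in \<open>auto intro!: less_imp_le[OF G_dec]\<close>)
  hence "Gf b (s/2) \<le> 0" by (intro tendsto_lowerbound[OF G_lim]) auto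
  moreover have "Gf b s < Gf b (s/2)" using assms neg by (intro G_dec) auto
  ultimately show "Gf b s < 0" by linarith
qed

lemma part2: assumes "b < 1/6" shows "\<exists>s. 0 < s \<and> s < pi/4 \<and> Gf b s \<le> 0"
proof -
  have L: "((\<lambda>s::real. (cos s * s - sin s)/(s * s * sin s) + 2 * b * ((sin s / cos s) / s))
      \<longlongrightarrow> -1/3 + 2 * b * 1) (at_right 0)"
    by (intro tendsto_intros lim3 lim4)
  have "eventually (\<lambda>s::real. (cos s * s - sin s)/(s * s * sin s) + 2 * b * ((sin s / cos s) / s) < 0) (at_right 0)"
    using assms by (intro order_tendstoD(2)[OF L]) auto
  moreover have "eventually (\<lambda>s::real. 0 < s \<and> s < pi/2) (at_right 0)"
    unfolding eventually_at_right_field by (rule exI[of _ "pi/2"]) auto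
  ultimately have "eventually (\<lambda>s. Gd b s < 0) (at_right 0)"
  proof eventually_elim
    case (elim s)
    have sp: "sin s > 0" "cos s > 0" using elim by (auto intro!: sin_gt_zero cos_gt_zero)
    have "Gd b s / s = (cos s * s - sin s)/(s * s * sin s) + 2 * b * ((sin s / cos s) / s)"
      using sp elim by (simp add: Gd_def field_simps)
    hence "Gd b s / s < 0" using elim by simp
    thus ?case using elim by (simp add: divide_less_0_iff)
  qed
  then obtain d where d: "d > 0" "\<And>y. y > 0 \<Longrightarrow> y < d \<Longrightarrow> Gd b y < 0"
    unfolding eventually_at_right_field by auto
  define s where "s = min d (pi/4) / 2"
  have m: "0 < min d (pi/4)" "min d (pi/4) \<le> pi/4" "min d (pi/4) \<le> d" using d pi_gt_zero by auto
  have s: "0 < s" "s < pi/4" "s < d" unfolding s_def using m by linarith+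
  have "eventually (\<lambda>t. Gf b s \<le> Gf b t) (at_right 0)"
    unfolding eventually_at_right_field
    by (rule exI[of _ s]) (use s d in \<open>auto intro!: less_imp_le[OF G_dec]\<close>)
  hence "Gf b s \<le> 0" by (intro tendsto_lowerbound[OF G_lim]) auto
  thus ?thesis using s by blast
qed

lemma part4: assumes "b > 2 / pi - 1/2" shows "\<exists>s. 0 < s \<and> s < pi/4 \<and> Gf b s < Gf b (pi/4)"
proof -
  have "Gd b (pi/4) = 1 - 4 / pi + 2 * b"
    by (simp add: Gd_def sin_45 cos_45)
  also have "\<dots> > 0" using assms by (simp add: algebra_simps)
  finally have "Gd b (pi/4) > 0" .
  from DERIV_pos_inc_left[OF G_deriv this] obtain d where
    d: "d > 0" "\<And>h. h > 0 \<Longrightarrow> h < d \<Longrightarrow> Gf b (pi/4 - h) < Gf b (pi/4)"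
    using pi_gt_zero by (auto simp: field_simps)
  define h where "h = min d (pi/4) / 2"
  have m: "0 < min d (pi/4)" "min d (pi/4) \<le> pi/4" "min d (pi/4) \<le> d" using d pi_gt_zero by auto
  have h: "0 < h" "h < d" "h < pi/4" unfolding h_def using m by linarith+
  show ?thesis using d(2)[OF h(1,2)] h by (intro exI[of _ "pi/4 - h"]) auto
qed

lemma trans_x:
  fixes x b :: real
  assumes "0 < x" "x < 1"
  shows "\<exists>s. 0 < s \<and> s < pi/4 \<and> x = cos (2 * s)"
proof -
  define s where "s = arccos x / 2"
  have "0 < arccos x" "arccos x < pi/2"
    using assms arccos_lt_bounded[of x] arccos_less_arccos[of 0 x] by auto
  moreover have "cos (2 * s) = x" using assms by (simp add: s_def)
  ultimately show ?thesis unfolding s_def by (intro exI[of _ "arccos x / 2"]) auto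
qed

theorem theorem2:
  fixes b :: real
  shows "(b \<ge> 1/6 \<longrightarrow>
            (\<forall>x::real. 0 < x \<and> x < 1 \<longrightarrow>
               pi / 2 * ((1 - x) powr (1/2) / (1 + x) powr b) < arccos x \<and>
               arccos x < 2 powr (b + 1/2) * ((1 - x) powr (1/2) / (1 + x) powr b)))
       \<and> ((\<forall>x::real. 0 < x \<and> x < 1 \<longrightarrow>
               arccos x < 2 powr (b + 1/2) * ((1 - x) powr (1/2) / (1 + x) powr b))
            \<longleftrightarrow> b \<ge> 1/6)
       \<and> (b \<le> 2 / pi - 1/2 \<longrightarrow>
            (\<forall>x::real. 0 < x \<and> x < 1 \<longrightarrow>
               2 powr (b + 1/2) * ((1 - x) powr (1/2) / (1 + x) powr b) < arccos x \<and>
               arccos x < pi / 2 * ((1 - x) powr (1/2) / (1 + x) powr b)))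
       \<and> ((\<forall>x::real. 0 < x \<and> x < 1 \<longrightarrow>
               arccos x < pi / 2 * ((1 - x) powr (1/2) / (1 + x) powr b))
            \<longleftrightarrow> b \<le> 2 / pi - 1/2)"

proof (intro conjI)
  show P1: "b \<ge> 1/6 \<longrightarrow>
            (\<forall>x::real. 0 < x \<and> x < 1 \<longrightarrow>
               pi / 2 * ((1 - x) powr (1/2) / (1 + x) powr b) < arccos x \<and>
               arccos x < 2 powr (b + 1/2) * ((1 - x) powr (1/2) / (1 + x) powr b))"
  proof (intro impI allI)
    fix x :: real assume b: "b \<ge> 1/6" and x: "0 < x \<and> x < 1"
    then obtain s where s: "0 < s" "s < pi/4" "x = cos (2 * s)" using trans_x by blast
    show "pi / 2 * ((1 - x) powr (1/2) / (1 + x) powr b) < arccos x \<and>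
               arccos x < 2 powr (b + 1/2) * ((1 - x) powr (1/2) / (1 + x) powr b)"
      unfolding s(3) using trans_lem(4,6)[OF s(1,2)] part1[OF b s(1,2)] by blast
  qed
  show "(\<forall>x::real. 0 < x \<and> x < 1 \<longrightarrow>
               arccos x < 2 powr (b + 1/2) * ((1 - x) powr (1/2) / (1 + x) powr b))
            \<longleftrightarrow> b \<ge> 1/6"
  proof
    assume H: "\<forall>x::real. 0 < x \<and> x < 1 \<longrightarrow>
               arccos x < 2 powr (b + 1/2) * ((1 - x) powr (1/2) / (1 + x) powr b)"
    show "b \<ge> 1/6"
    proof (rule ccontr)
      assume "\<not> b \<ge> 1/6"
      hence "b < 1/6" by simp
      then obtain s where s: "0 < s" "s < pi/4" "Gf b s \<le> 0" using part2 by blast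
      note T = trans_lem[OF s(1,2)]
      from H T(1,2) have "arccos (cos (2 * s)) < 2 powr (b + 1/2) * ((1 - cos (2 * s)) powr (1/2) / (1 + cos (2 * s)) powr b)"
        by blast
      with T(4) s(3) show False by auto
    qed
  next
    assume "b \<ge> 1/6"
    with P1 show "\<forall>x::real. 0 < x \<and> x < 1 \<longrightarrow>
               arccos x < 2 powr (b + 1/2) * ((1 - x) powr (1/2) / (1 + x) powr b)" by simp
  qed
  show P3: "b \<le> 2 / pi - 1/2 \<longrightarrow>
            (\<forall>x::real. 0 < x \<and> x < 1 \<longrightarrow>
               2 powr (b + 1/2) * ((1 - x) powr (1/2) / (1 + x) powr b) < arccos x \<and>
               arccos x < pi / 2 * ((1 - x) powr (1/2) / (1 + x) powr b))"
  proof (intro impI allI)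
    fix x :: real assume b: "b \<le> 2 / pi - 1/2" and x: "0 < x \<and> x < 1"
    then obtain s where s: "0 < s" "s < pi/4" "x = cos (2 * s)" using trans_x by blast
    show "2 powr (b + 1/2) * ((1 - x) powr (1/2) / (1 + x) powr b) < arccos x \<and>
               arccos x < pi / 2 * ((1 - x) powr (1/2) / (1 + x) powr b)"
      unfolding s(3) using trans_lem(5,7)[OF s(1,2)] part3[OF b s(1,2)] by blast
  qed
  show "(\<forall>x::real. 0 < x \<and> x < 1 \<longrightarrow>
               arccos x < pi / 2 * ((1 - x) powr (1/2) / (1 + x) powr b))
            \<longleftrightarrow> b \<le> 2 / pi - 1/2"
  proof
    assume H: "\<forall>x::real. 0 < x \<and> x < 1 \<longrightarrow>
               arccos x < pi / 2 * ((1 - x) powr (1/2) / (1 + x) powr b)"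
    show "b \<le> 2 / pi - 1/2"
    proof (rule ccontr)
      assume "\<not> b \<le> 2 / pi - 1/2"
      hence "b > 2 / pi - 1/2" by simp
      then obtain s where s: "0 < s" "s < pi/4" "Gf b s < Gf b (pi/4)" using part4 by blast
      note T = trans_lem[OF s(1,2)]
      from H T(1,2) have "arccos (cos (2 * s)) < pi / 2 * ((1 - cos (2 * s)) powr (1/2) / (1 + cos (2 * s)) powr b)"
        by blast
      with T(7) s(3) show False by auto
    qed
  next
    assume "b \<le> 2 / pi - 1/2"
    with P3 show "\<forall>x::real. 0 < x \<and> x < 1 \<longrightarrow>
               arccos x < pi / 2 * ((1 - x) powr (1/2) / (1 + x) powr b)" by simp
  qed
qed

end
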